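(* Let $D$ be a finite division semialgebra over $\mathbb{Z}_\mathrm{max}$. Then $D\cong F^{(n)}$ for some positive integer $n$ (in particular $D$ is commutative).
   Context: A (possibly noncommutative) semiring is a set with two associative binary operations, addition (commutative, with identity $0$) and multiplication (with identity $1$), satisfying both distributive laws. A division semiring is a semiring in which every nonzero element has a two-sided multiplicative inverse; a semifield is a commutative division semiring. $\mathbb{Z}_\mathrm{max}=\mathbb{Z}\cup\{-\infty\}$ is the semifield with addition $\max$ and multiplication ordinary addition; writing $u$ for the integer $1$ in it, $\mathbb{Z}_\mathrm{max}=\{0\}\cup\{u^k:k\in\mathbb{Z}\}$ with $u^a+u^b=u^{\max(a,b)}$. A division semialgebra over a semifield $K$ is a division semiring $D$ together with an injective homomorphism from $K$ into the center of $D$; it is finite if $D$ is finitely generated as a left $K$-semimodule. For a positive integer $n$, $F^{(n)}$ is the semifield $\mathbb{Z}_\mathrm{max}$ regarded as an extension of $\mathbb{Z}_\mathrm{max}$ via $u^k\mapsto u^{nk}$, $0\mapsto 0$; the isomorphism is one of semialgebras over $\mathbb{Z}_\mathrm{max}$. *)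

theory Defs
  imports Main
begin

text \<open>None is the zero element (-infinity); Some k is u^k.
  Addition is max, multiplication is addition of exponents.\<close>

definition zmax_add :: "int option \<Rightarrow> int option \<Rightarrow> int option" where
  "zmax_add a b = (case a of None \<Rightarrow> b
                   | Some x \<Rightarrow> (case b of None \<Rightarrow> Some x | Some y \<Rightarrow> Some (max x y)))"

definition zmax_mul :: "int option \<Rightarrow> int option \<Rightarrow> int option" where
  "zmax_mul a b = (case a of None \<Rightarrow> None
                   | Some x \<Rightarrow> (case b of None \<Rightarrow> None | Some y \<Rightarrow> Some (x + y)))"

definition zmax_zero :: "int option" where "zmax_zero = None"
definition zmax_one :: "int option" where "zmax_one = Some 0"

text \<open>The structure map of F^(n): u^k maps to u^(nk), 0 maps to 0.\<close>
definition F_embed :: "nat \<Rightarrow> int option \<Rightarrow> int option" where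
  "F_embed n = map_option (\<lambda>k. int n * k)"

definition is_semiring ::
  "('d \<Rightarrow> 'd \<Rightarrow> 'd) \<Rightarrow> ('d \<Rightarrow> 'd \<Rightarrow> 'd) \<Rightarrow> 'd \<Rightarrow> 'd \<Rightarrow> bool" where
  "is_semiring add mul zero one \<longleftrightarrow>
     (\<forall>a b c. add (add a b) c = add a (add b c)) \<and>
     (\<forall>a b. add a b = add b a) \<and>
     (\<forall>a. add zero a = a) \<and>
     (\<forall>a b c. mul (mul a b) c = mul a (mul b c)) \<and>
     (\<forall>a. mul one a = a \<and> mul a one = a) \<and>
     (\<forall>a b c. mul a (add b c) = add (mul a b) (mul a c)) \<and>
     (\<forall>a b c. mul (add a b) c = add (mul a c) (mul b c))"

definition is_division_semiring ::
  "('d \<Rightarrow> 'd \<Rightarrow> 'd) \<Rightarrow> ('d \<Rightarrow> 'd \<Rightarrow> 'd) \<Rightarrow> 'd \<Rightarrow> 'd \<Rightarrow> bool" where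
  "is_division_semiring add mul zero one \<longleftrightarrow>
     is_semiring add mul zero one \<and>
     (\<forall>a. a \<noteq> zero \<longrightarrow> (\<exists>b. mul a b = one \<and> mul b a = one))"

definition is_semiring_hom ::
  "('a \<Rightarrow> 'a \<Rightarrow> 'a) \<Rightarrow> ('a \<Rightarrow> 'a \<Rightarrow> 'a) \<Rightarrow> 'a \<Rightarrow> 'a \<Rightarrow>
   ('b \<Rightarrow> 'b \<Rightarrow> 'b) \<Rightarrow> ('b \<Rightarrow> 'b \<Rightarrow> 'b) \<Rightarrow> 'b \<Rightarrow> 'b \<Rightarrow> ('a \<Rightarrow> 'b) \<Rightarrow> bool" where
  "is_semiring_hom add1 mul1 zero1 one1 add2 mul2 zero2 one2 f \<longleftrightarrow>
     (\<forall>a b. f (add1 a b) = add2 (f a) (f b)) \<and>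
     (\<forall>a b. f (mul1 a b) = mul2 (f a) (f b)) \<and>
     f zero1 = zero2 \<and> f one1 = one2"

definition is_zmax_division_semialgebra ::
  "('d \<Rightarrow> 'd \<Rightarrow> 'd) \<Rightarrow> ('d \<Rightarrow> 'd \<Rightarrow> 'd) \<Rightarrow> 'd \<Rightarrow> 'd \<Rightarrow> (int option \<Rightarrow> 'd) \<Rightarrow> bool" where
  "is_zmax_division_semialgebra add mul zero one phi \<longleftrightarrow>
     is_division_semiring add mul zero one \<and>
     is_semiring_hom zmax_add zmax_mul zmax_zero zmax_one add mul zero one phi \<and>
     inj phi \<and>
     (\<forall>k d. mul (phi k) d = mul d (phi k))"

text \<open>Finite: D is finitely generated as a left Z_max-semimodule
  (scalar action k . d = phi k * d).\<close>
definition is_finite_semialgebra ::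
  "('d \<Rightarrow> 'd \<Rightarrow> 'd) \<Rightarrow> ('d \<Rightarrow> 'd \<Rightarrow> 'd) \<Rightarrow> 'd \<Rightarrow> (int option \<Rightarrow> 'd) \<Rightarrow> bool" where
  "is_finite_semialgebra add mul zero phi \<longleftrightarrow>
     (\<exists>gs :: 'd list. \<forall>x. \<exists>ks :: int option list.
        length ks = length gs \<and>
        x = foldr add (map2 (\<lambda>k g. mul (phi k) g) ks gs) zero)"

end

theory Submission
  imports Defs
begin

locale dsa =
  fixes add mul :: "'d \<Rightarrow> 'd \<Rightarrow> 'd" and zero one :: 'd and phi :: "int option \<Rightarrow> 'd"
    and gs :: "'d list"
  assumes sa: "is_zmax_division_semialgebra add mul zero one phi"
  and gen: "\<forall>x. \<exists>ks. length ks = length gs \<and> x = foldr add (map2 (\<lambda>k g. mul (phi k) g) ks gs) zero"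
begin

lemma semi: "is_semiring add mul zero one"
  using sa unfolding is_zmax_division_semialgebra_def is_division_semiring_def by blast
lemma add_assoc: "add (add a b) c = add a (add b c)" using semi unfolding is_semiring_def by blast
lemma add_comm: "add a b = add b a" using semi unfolding is_semiring_def by blast
lemma add_zero[simp]: "add zero a = a" using semi unfolding is_semiring_def by blast
lemma add_zero2[simp]: "add a zero = a" using add_comm add_zero by metis
lemma mul_assoc: "mul (mul a b) c = mul a (mul b c)" using semi unfolding is_semiring_def by blast
lemma mul_one[simp]: "mul one a = a" "mul a one = a" using semi unfolding is_semiring_def by blast+
lemma distl: "mul a (add b c) = add (mul a b) (mul a c)" using semi unfolding is_semiring_def by blast
lemma distr: "mul (add a b) c = add (mul a c) (mul b c)" using semi unfolding is_semiring_def by blast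
lemma invex: "a \<noteq> zero \<Longrightarrow> \<exists>b. mul a b = one \<and> mul b a = one"
  using sa unfolding is_zmax_division_semialgebra_def is_division_semiring_def by blast
lemma hom: "is_semiring_hom zmax_add zmax_mul zmax_zero zmax_one add mul zero one phi"
  using sa unfolding is_zmax_division_semialgebra_def by blast
lemma phi_add: "phi (zmax_add a b) = add (phi a) (phi b)" using hom unfolding is_semiring_hom_def by blast
lemma phi_mul: "phi (zmax_mul a b) = mul (phi a) (phi b)" using hom unfolding is_semiring_hom_def by blast
lemma phi_None: "phi None = zero" using hom unfolding is_semiring_hom_def zmax_zero_def by blast
lemma phi_0: "phi (Some 0) = one" using hom unfolding is_semiring_hom_def zmax_one_def by blast
lemma phi_inj: "inj phi" using sa unfolding is_zmax_division_semialgebra_def by blast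
lemma central: "mul (phi k) d = mul d (phi k)" using sa unfolding is_zmax_division_semialgebra_def by blast

lemma zero_ne_one: "zero \<noteq> one"
  using phi_inj phi_None phi_0 by (metis inj_eq option.distinct(1))

lemma idem[simp]: "add x x = x"
proof -
  have "add one one = one"
    using phi_add[of "Some 0" "Some 0"] phi_0 by (simp add: zmax_add_def)
  then have "mul (add one one) x = x" by simp
  then show ?thesis by (simp add: distr)
qed

lemma zz: "mul zero zero = zero"
  using phi_mul[of None None] phi_None by (simp add: zmax_mul_def)

lemma mul_zero_l[simp]: "mul zero a = zero"
proof (rule ccontr)
  assume h: "mul zero a \<noteq> zero"
  let ?z = "mul zero a"
  have zz': "mul zero ?z = ?z" by (simp add: mul_assoc[symmetric] zz)
  obtain b where b: "mul ?z b = one" using invex[OF h] by blast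
  have "mul zero one = one" using zz' b by (metis mul_assoc)
  then show False using zero_ne_one by simp
qed

lemma mul_zero_r[simp]: "mul a zero = zero"
proof (rule ccontr)
  assume h: "mul a zero \<noteq> zero"
  let ?z = "mul a zero"
  have zz': "mul ?z zero = ?z" by (simp add: mul_assoc zz)
  obtain b where b: "mul b ?z = one" using invex[OF h] by blast
  have "mul one zero = one" using zz' b by (metis mul_assoc)
  then show False using zero_ne_one by simp
qed

definition le where "le x y \<longleftrightarrow> add x y = y"

lemma le_refl[simp]: "le x x" by (simp add: le_def)
lemma le_antisym: "le x y \<Longrightarrow> le y x \<Longrightarrow> x = y" by (metis le_def add_comm)
lemma le_trans: "le x y \<Longrightarrow> le y z \<Longrightarrow> le x z" by (metis le_def add_assoc)
lemmas [trans] = le_trans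
lemma le_zero[simp]: "le zero x" by (simp add: le_def)
lemma le_add1: "le x (add x y)" by (metis le_def add_assoc idem)
lemma le_add2: "le y (add x y)" by (metis le_add1 add_comm)
lemma le_lub: "le x z \<Longrightarrow> le y z \<Longrightarrow> le (add x y) z" by (metis le_def add_assoc)
lemma le_mulL: "le x y \<Longrightarrow> le (mul c x) (mul c y)" by (metis le_def distl)
lemma le_mulR: "le x y \<Longrightarrow> le (mul x c) (mul y c)" by (metis le_def distr)
lemma le_mul: "le a b \<Longrightarrow> le c d \<Longrightarrow> le (mul a c) (mul b d)"
  by (meson le_mulL le_mulR le_trans)
lemma le_zero_iff: "le x zero \<longleftrightarrow> x = zero" by (simp add: le_def)

definition inv where "inv x = (SOME b. mul x b = one \<and> mul b x = one)"
lemma inv_r[simp]: "x \<noteq> zero \<Longrightarrow> mul x (inv x) = one"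
  and inv_l[simp]: "x \<noteq> zero \<Longrightarrow> mul (inv x) x = one"
  unfolding inv_def using someI_ex[OF invex] by blast+

lemma inv_nz: "x \<noteq> zero \<Longrightarrow> inv x \<noteq> zero" by (metis inv_r mul_zero_r zero_ne_one)

lemma cancelL: "x \<noteq> zero \<Longrightarrow> mul x a = mul x b \<Longrightarrow> a = b"
  by (metis inv_l mul_assoc mul_one(1))
lemma cancelR: "x \<noteq> zero \<Longrightarrow> mul a x = mul b x \<Longrightarrow> a = b"
  by (metis inv_r mul_assoc mul_one(2))
lemma le_cancelL: "x \<noteq> zero \<Longrightarrow> le (mul x a) (mul x b) \<Longrightarrow> le a b"
  by (metis distl le_def cancelL)
lemma le_cancelR: "x \<noteq> zero \<Longrightarrow> le (mul a x) (mul b x) \<Longrightarrow> le a b"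
  by (metis distr le_def cancelR)
lemma nzd: "a \<noteq> zero \<Longrightarrow> b \<noteq> zero \<Longrightarrow> mul a b \<noteq> zero"
  by (metis mul_zero_r cancelL)

definition T where "T k = phi (Some k)"
lemma T_add: "T (a + b) = mul (T a) (T b)"
  unfolding T_def using phi_mul[of "Some a" "Some b"] by (simp add: zmax_mul_def)
lemma T_0[simp]: "T 0 = one" by (simp add: T_def phi_0)
lemma T_max: "add (T a) (T b) = T (max a b)"
  unfolding T_def using phi_add[of "Some a" "Some b"] by (simp add: zmax_add_def)
lemma T_inj: "T a = T b \<Longrightarrow> a = b" unfolding T_def using phi_inj by (simp add: inj_eq)
lemma T_le: "le (T a) (T b) \<longleftrightarrow> a \<le> b"
  unfolding le_def T_max by (metis T_inj max.absorb_iff2)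
lemma T_nz: "T a \<noteq> zero"
  by (metis T_0 T_add add.right_inverse mul_zero_l zero_ne_one)
lemma T_central: "mul (T k) d = mul d (T k)" unfolding T_def by (rule central)

lemma foldr_ub: "z \<in> set xs \<Longrightarrow> le z (foldr add xs zero)"
  by (induction xs) (auto intro: le_trans le_add1 le_add2)
lemma foldr_lub: "\<forall>z\<in>set xs. le z y \<Longrightarrow> le (foldr add xs zero) y"
  by (induction xs) (auto intro: le_lub)

definition tm where "tm ks i = mul (phi (ks!i)) (gs!i)"

lemma rep: "\<exists>ks. length ks = length gs \<and> (\<forall>i<length gs. le (tm ks i) x)
   \<and> (\<forall>y. (\<forall>i<length gs. le (tm ks i) y) \<longrightarrow> le x y)"
proof -
  obtain ks where l: "length ks = length gs" and x: "x = foldr add (map2 (\<lambda>k g. mul (phi k) g) ks gs) zero"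
    using gen by blast
  let ?xs = "map2 (\<lambda>k g. mul (phi k) g) ks gs"
  have st: "set ?xs = {tm ks i | i. i < length gs}"
  proof -
    have len: "length ?xs = length gs" using l by simp
    have nth: "\<And>i. i < length gs \<Longrightarrow> ?xs ! i = tm ks i" using l by (simp add: tm_def)
    show ?thesis unfolding set_conv_nth using len nth by (metis (no_types, lifting))
  qed
  have a: "\<forall>i<length gs. le (tm ks i) x"
  proof (intro allI impI)
    fix i assume "i < length gs"
    then have "tm ks i \<in> {tm ks i | i. i < length gs}" by blast
    then have "tm ks i \<in> set ?xs" unfolding st .
    then have "le (tm ks i) (foldr add ?xs zero)" by (rule foldr_ub)
    with x show "le (tm ks i) x" by (rule ssubst)
  qed
  have b: "\<forall>y. (\<forall>i<length gs. le (tm ks i) y) \<longrightarrow> le x y"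
  proof (intro allI impI)
    fix y assume "\<forall>i<length gs. le (tm ks i) y"
    then have "\<forall>z\<in>{tm ks i | i. i < length gs}. le z y" by blast
    then have "\<forall>z\<in>set ?xs. le z y" unfolding st .
    then have "le (foldr add ?xs zero) y" by (rule foldr_lub)
    with x show "le x y" by (rule ssubst)
  qed
  show ?thesis using l a b by blast
qed

lemma tm_None: "ks!i = None \<Longrightarrow> tm ks i = zero" by (simp add: tm_def phi_None)
lemma tm_Some: "ks!i = Some k \<Longrightarrow> tm ks i = mul (T k) (gs!i)" by (simp add: tm_def T_def)

definition G where "G = foldr add gs zero"
lemma le_G: "i < length gs \<Longrightarrow> le (gs!i) G" unfolding G_def by (simp add: foldr_ub)

lemma U: "\<exists>K. le x (mul (T K) G)"
proof -
  obtain ks where l: "length ks = length gs" and r1: "\<forall>i<length gs. le (tm ks i) x"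
    and r2: "\<forall>y. (\<forall>i<length gs. le (tm ks i) y) \<longrightarrow> le x y" using rep by blast
  define K where "K = Max (insert 0 (the ` (set ks - {None})))"
  have "\<forall>i<length gs. le (tm ks i) (mul (T K) G)"
  proof (intro allI impI)
    fix i assume i: "i < length gs"
    show "le (tm ks i) (mul (T K) G)"
    proof (cases "ks!i")
      case None then show ?thesis by (simp add: tm_None)
    next
      case (Some k)
      have "k \<in> the ` (set ks - {None})" using Some i l
        by (metis DiffI image_eqI nth_mem option.distinct(1) option.sel singletonD)
      then have "k \<le> K" unfolding K_def by simp
      then show ?thesis using Some tm_Some le_mul T_le le_G i by metis
    qed
  qed
  then show ?thesis using r2 by blast
qed

lemma G_nz: "G \<noteq> zero"
proof
  assume "G = zero"
  then have "le one zero" using U[of one] by auto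
  then show False using zero_ne_one le_zero_iff by auto
qed

lemma G_T: "\<exists>K. le G (T K)"
proof -
  obtain K where "le (mul G G) (mul (T K) G)" using U by blast
  then have "le (mul G G) (mul G (T K))" using T_central by simp
  then show ?thesis using le_cancelL G_nz by blast
qed

lemma upper: "\<exists>h. le x (T h)"
proof -
  obtain K where "le x (mul (T K) G)" using U by blast
  moreover obtain K2 where "le G (T K2)" using G_T by blast
  ultimately have "le x (mul (T K) (T K2))" by (meson le_mulL le_trans)
  then show ?thesis using T_add by metis
qed

lemma lower: "x \<noteq> zero \<Longrightarrow> \<exists>l. le (T l) x"
proof -
  assume x: "x \<noteq> zero"
  obtain h where "le (inv x) (T h)" using upper by blast
  then have "le (mul x (inv x)) (mul x (T h))" by (rule le_mulL)
  then have "le one (mul x (T h))" using x by simp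
  then have "le (mul (T (-h)) one) (mul (T (-h)) (mul x (T h)))" by (rule le_mulL)
  also have "mul (T (-h)) (mul x (T h)) = x"
    by (metis T_add T_central add.commute add.right_inverse T_0 mul_assoc mul_one(1))
  finally show ?thesis by auto
qed

end

context dsa begin

lemma spread: "\<exists>a b. \<forall>x. x \<noteq> zero \<longrightarrow> (\<exists>k. le (T (k - a)) x \<and> le x (T (k + b)))"
proof -
  define lg where "lg i = (SOME l. le (T l) (gs!i))" for i
  have lg: "le (T (lg i)) (gs!i)" if "gs!i \<noteq> zero" for i
    unfolding lg_def using lower[OF that] by (rule someI_ex)
  define a where "a = Max (insert 0 ((\<lambda>i. - lg i) ` {i. i < length gs \<and> gs!i \<noteq> zero}))"
  have a: "- lg i \<le> a" if "i < length gs" "gs!i \<noteq> zero" for i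
    unfolding a_def by (rule Max_ge) (use that in auto)
  obtain b where b: "le G (T b)" using G_T by blast
  have main: "\<forall>x. x \<noteq> zero \<longrightarrow> (\<exists>k. le (T (k - a)) x \<and> le x (T (k + b)))"
  proof (intro allI impI)
    fix x assume x: "x \<noteq> zero"
    obtain ks where l: "length ks = length gs" and r1: "\<forall>i<length gs. le (tm ks i) x"
      and r2: "\<forall>y. (\<forall>i<length gs. le (tm ks i) y) \<longrightarrow> le x y" using rep by blast
    define I where "I = {i. i < length gs \<and> gs!i \<noteq> zero \<and> ks!i \<noteq> None}"
    have fI: "finite I" unfolding I_def by simp
    have nI: "I \<noteq> {}"
    proof
      assume "I = {}"
      have "\<forall>i<length gs. tm ks i = zero"
      proof (intro allI impI)
        fix i assume i: "i < length gs"
        show "tm ks i = zero"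
        proof (cases "gs!i = zero")
          case True then show ?thesis by (simp add: tm_def)
        next
          case False
          then have "ks!i = None" using i \<open>I = {}\<close> unfolding I_def by blast
          then show ?thesis by (rule tm_None)
        qed
      qed
      then have "le x zero" using r2 by simp
      then show False using x le_zero_iff by simp
    qed
    define k where "k = Max ((\<lambda>i. the (ks!i)) ` I)"
    have "k \<in> (\<lambda>i. the (ks!i)) ` I" unfolding k_def using fI nI by (intro Max_in) auto
    then obtain i0 where i0: "i0 \<in> I" "the (ks!i0) = k" by blast
    have kmax: "the (ks!i) \<le> k" if "i \<in> I" for i unfolding k_def using fI that by simp
    have up: "\<forall>i<length gs. le (tm ks i) (mul (T k) G)"
    proof (intro allI impI)
      fix i assume i: "i < length gs"
      show "le (tm ks i) (mul (T k) G)"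
      proof (cases "gs!i = zero \<or> ks!i = None")
        case True then show ?thesis by (metis le_zero mul_zero_r tm_None tm_def)
      next
        case False
        then obtain kk where kk: "ks!i = Some kk" "gs!i \<noteq> zero" by auto
        then have "i \<in> I" using i unfolding I_def by auto
        then have "kk \<le> k" using kmax[of i] kk by simp
        then have "le (T kk) (T k)" by (simp add: T_le)
        from le_mul[OF this le_G[OF i]] show ?thesis using tm_Some[OF kk(1)] by simp
      qed
    qed
    have "le x (mul (T k) G)" using r2 up by blast
    also have "le (mul (T k) G) (T (k + b))" using le_mulL[OF b, of "T k"] by (simp add: T_add)
    finally have u: "le x (T (k + b))" .
    obtain kk where kk: "ks!i0 = Some kk" "gs!i0 \<noteq> zero" "i0 < length gs" using i0 unfolding I_def by auto
    then have kkk: "kk = k" using i0 by simp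
    have "le (T (k - a)) (T (k + lg i0))" using a[OF kk(3) kk(2)] T_le by simp
    also have "T (k + lg i0) = mul (T k) (T (lg i0))" by (rule T_add)
    also have "le (mul (T k) (T (lg i0))) (mul (T k) (gs!i0))" using lg[OF kk(2)] le_mulL by blast
    also have "mul (T k) (gs!i0) = tm ks i0" using tm_Some kk kkk by simp
    also have "le (tm ks i0) x" using r1 kk by blast
    finally have "le (T (k - a)) x" .
    with u show "\<exists>k. le (T (k - a)) x \<and> le x (T (k + b))" by blast
  qed
  show ?thesis apply (rule exI[of _ a], rule exI[of _ b]) by (rule main)
qed

lemma int_greatest: "P (k0::int) \<Longrightarrow> (\<forall>k. P k \<longrightarrow> k \<le> B) \<Longrightarrow> \<exists>m. P m \<and> (\<forall>k. P k \<longrightarrow> k \<le> m)"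
proof -
  assume p: "P k0" and b: "\<forall>k. P k \<longrightarrow> k \<le> B"
  let ?S = "{k. P k \<and> k0 \<le> k}"
  have f: "finite ?S" by (rule finite_subset[of _ "{k0..B}"]) (use b in auto)
  have ne: "k0 \<in> ?S" using p by simp
  have m: "Max ?S \<in> ?S" using Max_in[OF f] ne by blast
  have "\<forall>k. P k \<longrightarrow> k \<le> Max ?S"
  proof (intro allI impI)
    fix k assume pk: "P k"
    show "k \<le> Max ?S"
    proof (cases "k0 \<le> k")
      case True then show ?thesis using Max_ge[OF f] pk by simp
    next
      case False then show ?thesis using m by simp
    qed
  qed
  then show ?thesis using m by blast
qed

definition cg where "cg x g = (SOME m. le (mul (T m) g) x \<and> (\<forall>k. le (mul (T k) g) x \<longrightarrow> k \<le> m))"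

lemma cg: assumes x: "x \<noteq> zero" and g: "g \<noteq> zero"
  shows "le (mul (T (cg x g)) g) x" "\<And>k. le (mul (T k) g) x \<Longrightarrow> k \<le> cg x g"
proof -
  obtain l where l: "le (T l) x" using lower[OF x] by blast
  obtain h where h: "le g (T h)" using upper by blast
  obtain h' where h': "le x (T h')" using upper by blast
  obtain l' where l': "le (T l') g" using lower[OF g] by blast
  have ne: "le (mul (T (l - h)) g) x"
  proof -
    have "le (mul (T (l - h)) g) (mul (T (l - h)) (T h))" using h by (rule le_mulL)
    also have "mul (T (l - h)) (T h) = T l" by (simp add: T_add[symmetric])
    finally show ?thesis using l by (rule le_trans)
  qed
  have bd: "\<forall>k. le (mul (T k) g) x \<longrightarrow> k \<le> h' - l'"
  proof (intro allI impI)
    fix k assume k: "le (mul (T k) g) x"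
    have "le (T (k + l')) (mul (T k) g)" using l' by (simp add: T_add le_mulL)
    also note k also note h'
    finally show "k \<le> h' - l'" using T_le by simp
  qed
  have "\<exists>m. le (mul (T m) g) x \<and> (\<forall>k. le (mul (T k) g) x \<longrightarrow> k \<le> m)"
    by (rule int_greatest[OF ne bd])
  then have "le (mul (T (cg x g)) g) x \<and> (\<forall>k. le (mul (T k) g) x \<longrightarrow> k \<le> cg x g)"
    unfolding cg_def by (rule someI_ex)
  then show "le (mul (T (cg x g)) g) x" "\<And>k. le (mul (T k) g) x \<Longrightarrow> k \<le> cg x g" by auto
qed

lemma cg_mono: "x \<noteq> zero \<Longrightarrow> g \<noteq> zero \<Longrightarrow> le x y \<Longrightarrow> cg x g \<le> cg y g"
proof -
  assume a: "x \<noteq> zero" "g \<noteq> zero" "le x y"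
  then have y: "y \<noteq> zero" using le_zero_iff by auto
  show ?thesis using cg(2)[OF y a(2)] le_trans[OF cg(1)[OF a(1,2)] a(3)] by blast
qed

definition ctm where "ctm x i = (if gs!i = zero then zero else mul (T (cg x (gs!i))) (gs!i))"

lemma ctm_le: "x \<noteq> zero \<Longrightarrow> le (ctm x i) x"
  unfolding ctm_def using cg(1) by auto

lemma ctm_lub: assumes x: "x \<noteq> zero" and h: "\<forall>i<length gs. le (ctm x i) y" shows "le x y"
proof -
  obtain ks where l: "length ks = length gs" and r1: "\<forall>i<length gs. le (tm ks i) x"
      and r2: "\<forall>y. (\<forall>i<length gs. le (tm ks i) y) \<longrightarrow> le x y" using rep by blast
  have "\<forall>i<length gs. le (tm ks i) y"
  proof (intro allI impI)
    fix i assume i: "i < length gs"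
    have "le (tm ks i) (ctm x i)"
    proof (cases "gs!i = zero")
      case True then show ?thesis by (simp add: tm_def ctm_def)
    next
      case False
      show ?thesis
      proof (cases "ks!i")
        case None then show ?thesis by (simp add: tm_None)
      next
        case (Some k)
        then have "le (mul (T k) (gs!i)) x" using r1 i tm_Some by metis
        then have "k \<le> cg x (gs!i)" using cg(2)[OF x False] by blast
        then show ?thesis using Some tm_Some False ctm_def T_le le_mulR by metis
      qed
    qed
    then show "le (tm ks i) y" using h i le_trans by blast
  qed
  then show ?thesis using r2 by blast
qed

lemma cg_inj: assumes x: "x \<noteq> zero" and y: "y \<noteq> zero"
  and e: "\<forall>i<length gs. gs!i \<noteq> zero \<longrightarrow> cg x (gs!i) = cg y (gs!i)" shows "x = y"
proof -
  have c: "\<forall>i<length gs. ctm x i = ctm y i" using e unfolding ctm_def by auto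
  have "le x y" using ctm_lub[OF x] c ctm_le[OF y] by metis
  moreover have "le y x" using ctm_lub[OF y] c ctm_le[OF x] by metis
  ultimately show ?thesis by (rule le_antisym)
qed

lemma fin_int: assumes lo: "lo \<noteq> zero" shows "finite {x. le lo x \<and> le x hi}"
proof -
  let ?A = "{x. le lo x \<and> le x hi}"
  define f where "f x = map (\<lambda>i. if gs!i = zero then 0 else cg x (gs!i)) [0..<length gs]" for x
  define R where "R = insert 0 (\<Union>i<length gs. {cg lo (gs!i)..cg hi (gs!i)})"
  have fR: "finite R" unfolding R_def by auto
  have nz: "x \<noteq> zero" if "x \<in> ?A" for x using that lo le_zero_iff by auto
  have "f ` ?A \<subseteq> {xs. set xs \<subseteq> R \<and> length xs = length gs}"
  proof
    fix xs assume "xs \<in> f ` ?A"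
    then obtain x where x: "x \<in> ?A" and xs: "xs = f x" by blast
    have "x \<noteq> zero" using nz x by blast
    have "set xs \<subseteq> R"
    proof
      fix v assume "v \<in> set xs"
      then obtain i where i: "i < length gs" and v: "v = (if gs!i = zero then 0 else cg x (gs!i))"
        unfolding xs f_def by auto
      show "v \<in> R"
      proof (cases "gs!i = zero")
        case True then show ?thesis using v R_def by simp
      next
        case False
        have "cg lo (gs!i) \<le> cg x (gs!i)" using cg_mono[OF lo False] x by simp
        moreover have "cg x (gs!i) \<le> cg hi (gs!i)" using cg_mono[OF \<open>x \<noteq> zero\<close> False] x by simp
        ultimately show ?thesis using v False i R_def by auto
      qed
    qed
    then show "xs \<in> {xs. set xs \<subseteq> R \<and> length xs = length gs}" unfolding xs f_def by simp
  qed
  then have "finite (f ` ?A)" by (rule finite_subset) (rule finite_lists_length_eq[OF fR])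
  moreover have "inj_on f ?A"
  proof (rule inj_onI)
    fix x y assume xA: "x \<in> ?A" and yA: "y \<in> ?A" and fe: "f x = f y"
    have "\<forall>i<length gs. gs!i \<noteq> zero \<longrightarrow> cg x (gs!i) = cg y (gs!i)"
    proof (intro allI impI)
      fix i assume i: "i < length gs" and g: "gs!i \<noteq> zero"
      have "f x ! i = f y ! i" using fe by simp
      then show "cg x (gs!i) = cg y (gs!i)" using i g unfolding f_def by simp
    qed
    then show "x = y" by (rule cg_inj[OF nz[OF xA] nz[OF yA]])
  qed
  ultimately show ?thesis by (rule finite_imageD)
qed

end

context dsa begin

definition npow where "npow x n = (mul x ^^ n) one"
lemma npow_0[simp]: "npow x 0 = one" by (simp add: npow_def)
lemma npow_Suc: "npow x (Suc n) = mul x (npow x n)" by (simp add: npow_def)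
lemma npow_add: "npow x (a + b) = mul (npow x a) (npow x b)"
  by (induction a) (simp_all add: npow_Suc mul_assoc)
lemma npow_Suc2: "npow x (Suc n) = mul (npow x n) x"
  using npow_add[of x n 1] by (simp add: npow_Suc)
lemma npow_nz: "x \<noteq> zero \<Longrightarrow> npow x n \<noteq> zero"
  by (induction n) (simp_all add: npow_Suc nzd zero_ne_one[symmetric])
lemma npow_one: "npow one n = one" by (induction n) (simp_all add: npow_Suc)
lemma npow_le_one: "le x one \<Longrightarrow> le (npow x n) one"
proof (induction n)
  case 0 then show ?case by simp
next
  case (Suc n)
  have "le (mul x (npow x n)) (mul one one)" using le_mul[OF Suc.prems Suc.IH[OF Suc.prems]] .
  then show ?case by (simp add: npow_Suc)
qed
lemma npow_le_self: "le x one \<Longrightarrow> le (npow x (Suc n)) x"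
proof -
  assume "le x one"
  then have "le (mul x (npow x n)) (mul x one)" using npow_le_one le_mulL by blast
  then show ?thesis by (simp add: npow_Suc)
qed
lemma one_le_npow: "le one x \<Longrightarrow> le one (npow x n)"
proof (induction n)
  case 0 then show ?case by simp
next
  case (Suc n)
  have "le (mul one one) (mul x (npow x n))" using le_mul[OF Suc.prems Suc.IH[OF Suc.prems]] .
  then show ?case by (simp add: npow_Suc)
qed

lemma small: assumes y1: "le y one" and yn: "y \<noteq> one" shows "\<exists>A. le (npow y A) (T (-1))"
proof (rule ccontr)
  assume nA: "\<not> (\<exists>A. le (npow y A) (T (-1)))"
  have yz: "y \<noteq> zero"
  proof
    assume "y = zero"
    then have "npow y 1 = zero" by (simp add: npow_Suc)
    then show False using nA le_zero by metis
  qed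
  obtain a b where ab: "\<forall>x. x \<noteq> zero \<longrightarrow> (\<exists>k. le (T (k - a)) x \<and> le x (T (k + b)))"
    using spread by blast
  have inI: "npow y A \<in> {x. le (T (- a - b)) x \<and> le x one}" for A
  proof -
    obtain k where k1: "le (T (k - a)) (npow y A)" and k2: "le (npow y A) (T (k + b))"
      using ab npow_nz[OF yz] by blast
    have "\<not> (k + b \<le> -1)"
    proof
      assume "k + b \<le> -1"
      then have "le (T (k + b)) (T (-1))" by (simp add: T_le)
      then show False using le_trans[OF k2] nA by blast
    qed
    then have "le (T (- a - b)) (T (k - a))" by (simp add: T_le)
    then have "le (T (- a - b)) (npow y A)" using k1 by (rule le_trans)
    then show ?thesis using npow_le_one[OF y1] by simp
  qed
  have fin: "finite {x. le (T (- a - b)) x \<and> le x one}" by (rule fin_int[OF T_nz])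
  have "\<not> inj (npow y)"
  proof
    assume "inj (npow y)"
    moreover have "finite (range (npow y))" using inI by (intro finite_subset[OF _ fin]) blast
    ultimately have "finite (UNIV :: nat set)" using finite_imageD by blast
    then show False by simp
  qed
  then obtain i j where ij: "i \<noteq> j" "npow y i = npow y j" unfolding inj_def by blast
  have "\<exists>i d. npow y i = npow y (i + Suc d)"
  proof (cases "i < j")
    case True
    then obtain d where "j = Suc (i + d)" using less_iff_Suc_add by blast
    then have "j = i + Suc d" by simp
    then show ?thesis using ij by blast
  next
    case False then have "j < i" using ij by simp
    then obtain d where "i = Suc (j + d)" using less_iff_Suc_add by blast
    then have "i = j + Suc d" by simp
    then show ?thesis using ij by metis
  qed
  then obtain i d where e: "npow y i = npow y (i + Suc d)" by blast
  have "npow y (i + Suc d) = mul (npow y i) (npow y (Suc d))" by (rule npow_add)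
  then have "mul (npow y i) one = mul (npow y i) (npow y (Suc d))" using e by simp
  then have "npow y (Suc d) = one" using cancelL[OF npow_nz[OF yz]] by metis
  then have "le one y" using npow_le_self[OF y1, of d] by simp
  then show False using y1 yn le_antisym by blast
qed

lemma two: assumes "le y one" "le z one"
  shows "le (npow (add y z) (a + b)) (add (npow y a) (npow z b))"
proof -
  let ?s = "add y z"
  have s1: "le ?s one" using assms by (rule le_lub)
  have "\<forall>a b. a + b = n \<longrightarrow> le (npow ?s n) (add (npow y a) (npow z b))" for n
  proof (induction n)
    case 0 then show ?case by simp
  next
    case (Suc n)
    show ?case
    proof (intro allI impI)
      fix a b assume ab: "a + b = Suc n"
      have sn: "le (npow ?s n) one" using npow_le_one[OF s1] .
      have e: "npow ?s (Suc n) = add (mul y (npow ?s n)) (mul z (npow ?s n))"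
        by (simp add: npow_Suc distr)
      have p1: "le (mul y (npow ?s n)) (add (npow y a) (npow z b))"
      proof (cases a)
        case 0
        have "le (mul y (npow ?s n)) (mul one one)" using le_mul[OF assms(1) sn] .
        then show ?thesis using 0 le_add1 le_trans by fastforce
      next
        case (Suc a')
        then have "le (npow ?s n) (add (npow y a') (npow z b))" using Suc.IH ab by simp
        then have "le (mul y (npow ?s n)) (add (npow y a) (mul y (npow z b)))"
          using le_mulL Suc by (metis distl npow_Suc)
        moreover have "le (mul y (npow z b)) (mul one (npow z b))" using le_mulR[OF assms(1)] .
        then have "le (add (npow y a) (mul y (npow z b))) (add (npow y a) (npow z b))"
          by (metis le_add1 le_add2 le_lub le_trans mul_one(1))
        ultimately show ?thesis by (rule le_trans)
      qed
      have p2: "le (mul z (npow ?s n)) (add (npow y a) (npow z b))"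
      proof (cases b)
        case 0
        have "le (mul z (npow ?s n)) (mul one one)" using le_mul[OF assms(2) sn] .
        then show ?thesis using 0 le_add2 le_trans by fastforce
      next
        case (Suc b')
        then have "le (npow ?s n) (add (npow y a) (npow z b'))" using Suc.IH ab by simp
        then have "le (mul z (npow ?s n)) (add (mul z (npow y a)) (npow z b))"
          using le_mulL Suc by (metis distl npow_Suc)
        moreover have "le (mul z (npow y a)) (mul one (npow y a))" using le_mulR[OF assms(2)] .
        then have "le (add (mul z (npow y a)) (npow z b)) (add (npow y a) (npow z b))"
          by (metis le_add1 le_add2 le_lub le_trans mul_one(1))
        ultimately show ?thesis by (rule le_trans)
      qed
      show "le (npow ?s (Suc n)) (add (npow y a) (npow z b))" unfolding e using p1 p2 by (rule le_lub)
    qed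
  qed
  then show ?thesis by blast
qed

lemma T1: "le one (T 1)" "one \<noteq> T 1"
  using T_le[of 0 1] T_inj[of 0 1] by auto

lemma total1: "le x one \<or> le one x"
proof (rule ccontr)
  assume h: "\<not> (le x one \<or> le one x)"
  let ?p = "add x one"
  have p1: "le one ?p" by (rule le_add2)
  have px: "le x ?p" by (rule le_add1)
  have pz: "?p \<noteq> zero" using p1 le_zero_iff zero_ne_one by metis
  have pnx: "?p \<noteq> x" using h p1 by metis
  have pn1: "?p \<noteq> one" using h px by metis
  let ?y = "mul x (inv ?p)" and ?z = "inv ?p"
  have "add ?y ?z = mul ?p ?z" by (simp add: distr)
  then have yz: "add ?y ?z = one" using pz by simp
  have y1: "le ?y one" using le_mulR[OF px, of "inv ?p"] pz by simp
  have yn: "?y \<noteq> one"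
  proof
    assume "?y = one"
    then have "mul (mul x (inv ?p)) ?p = ?p" by simp
    then show False using pz pnx by (simp add: mul_assoc)
  qed
  have z1: "le ?z one" using le_mulL[OF p1, of "inv ?p"] pz by simp
  have zn: "?z \<noteq> one"
  proof
    assume "?z = one"
    then have "mul ?p ?z = ?p" by simp
    then show False using pz pn1 by simp
  qed
  obtain A where A: "le (npow ?y A) (T (-1))" using small[OF y1 yn] by blast
  obtain B where B: "le (npow ?z B) (T (-1))" using small[OF z1 zn] by blast
  have "le (npow (add ?y ?z) (A + B)) (add (npow ?y A) (npow ?z B))" by (rule two[OF y1 z1])
  then have "le one (add (npow ?y A) (npow ?z B))" using yz npow_one by simp
  also have "le (add (npow ?y A) (npow ?z B)) (T (-1))" using A B by (rule le_lub)
  finally have "le (T 0) (T (-1))" by simp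
  then show False unfolding T_le by simp
qed

lemma total: "le x y \<or> le y x"
proof (cases "x = zero")
  case True then show ?thesis by simp
next
  case False
  have "le (mul y (inv x)) one \<or> le one (mul y (inv x))" by (rule total1)
  then show ?thesis
  proof
    assume "le (mul y (inv x)) one"
    then have "le (mul (mul y (inv x)) x) (mul one x)" by (rule le_mulR)
    then show ?thesis using False by (simp add: mul_assoc)
  next
    assume "le one (mul y (inv x))"
    then have "le (mul one x) (mul (mul y (inv x)) x)" by (rule le_mulR)
    then show ?thesis using False by (simp add: mul_assoc)
  qed
qed

end

context dsa begin

lemma fin_min: "finite S \<Longrightarrow> S \<noteq> {} \<Longrightarrow> \<exists>w\<in>S. \<forall>z\<in>S. le w z"
proof (induction S rule: finite_ne_induct)
  case (singleton x) then show ?case by simp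
next
  case (insert x F)
  obtain w where w: "w \<in> F" "\<forall>z\<in>F. le w z" using insert.IH by blast
  show ?case
  proof (cases "le x w")
    case True
    have "\<forall>z\<in>insert x F. le x z" using w le_trans[OF True] by auto
    then show ?thesis by blast
  next
    case False
    then have "le w x" using total by blast
    then have "\<forall>z\<in>insert x F. le w z" using w by auto
    then show ?thesis using w(1) by blast
  qed
qed

lemma w_ex: "\<exists>w. le one w \<and> w \<noteq> one \<and> (\<forall>z. le one z \<and> z \<noteq> one \<longrightarrow> le w z)"
proof -
  let ?S = "{x. le one x \<and> x \<noteq> one \<and> le x (T 1)}"
  have "?S \<subseteq> {x. le one x \<and> le x (T 1)}" by blast
  moreover have "finite {x. le one x \<and> le x (T 1)}" using fin_int zero_ne_one by metis
  ultimately have f: "finite ?S" by (rule finite_subset)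
  have "T 1 \<in> ?S" using T1 by simp
  then have "?S \<noteq> {}" by blast
  then obtain w where w: "w \<in> ?S" "\<forall>z\<in>?S. le w z" using fin_min[OF f] by blast
  have "\<forall>z. le one z \<and> z \<noteq> one \<longrightarrow> le w z"
  proof (intro allI impI)
    fix z assume z: "le one z \<and> z \<noteq> one"
    show "le w z"
    proof (cases "le z (T 1)")
      case True then show ?thesis using w z by blast
    next
      case False
      then have "le (T 1) z" using total by blast
      moreover have "le w (T 1)" using w by blast
      ultimately show ?thesis using le_trans by blast
    qed
  qed
  then show ?thesis using w by blast
qed

definition w where "w = (SOME w. le one w \<and> w \<noteq> one \<and> (\<forall>z. le one z \<and> z \<noteq> one \<longrightarrow> le w z))"
lemma w: "le one w" "w \<noteq> one" "\<And>z. le one z \<Longrightarrow> z \<noteq> one \<Longrightarrow> le w z"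
proof -
  have "le one w \<and> w \<noteq> one \<and> (\<forall>z. le one z \<and> z \<noteq> one \<longrightarrow> le w z)"
    unfolding w_def using w_ex by (rule someI_ex)
  then show "le one w" "w \<noteq> one" "\<And>z. le one z \<Longrightarrow> z \<noteq> one \<Longrightarrow> le w z" by auto
qed
lemma w_nz: "w \<noteq> zero" using w(1) le_zero_iff zero_ne_one by metis

definition wi where "wi = inv w"
lemma wwi[simp]: "mul w wi = one" "mul wi w = one" unfolding wi_def using w_nz by simp_all
lemma wi_nz: "wi \<noteq> zero" using wwi(1) by (metis mul_zero_r zero_ne_one)

definition pw where "pw j = (if 0 \<le> j then npow w (nat j) else npow wi (nat (- j)))"

lemma pw_0[simp]: "pw 0 = one" by (simp add: pw_def)

lemma pw_Suc: "pw (j + 1) = mul (pw j) w"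
proof (cases "0 \<le> j")
  case True
  then have "nat (j + 1) = Suc (nat j)" by simp
  then show ?thesis using True by (simp add: pw_def npow_Suc2)
next
  case False
  define m where "m = nat (- j - 1)"
  have a: "pw j = npow wi (Suc m)" using False unfolding pw_def m_def by (simp add: Suc_nat_eq_nat_zadd1)
  have b: "pw (j + 1) = npow wi m"
  proof (cases "j + 1 = 0")
    case True then show ?thesis unfolding m_def pw_def by simp
  next
    case False
    then show ?thesis using \<open>\<not> 0 \<le> j\<close> unfolding m_def pw_def by simp
  qed
  show ?thesis unfolding a b by (simp add: npow_Suc2 mul_assoc)
qed

lemma pw_pred: "pw (j - 1) = mul (pw j) wi"
proof -
  have "pw j = mul (pw (j - 1)) w" using pw_Suc[of "j - 1"] by simp
  then have "mul (pw j) wi = mul (mul (pw (j - 1)) w) wi" by simp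
  also have "\<dots> = pw (j - 1)" by (simp add: mul_assoc)
  finally show ?thesis by simp
qed

lemma pw_add: "pw (a + b) = mul (pw a) (pw b)"
proof (induction b rule: int_induct[where k = 0])
  case base then show ?case by simp
next
  case (step1 i)
  have "pw (a + (i + 1)) = pw ((a + i) + 1)" by (simp add: add.assoc)
  also have "\<dots> = mul (pw (a + i)) w" by (rule pw_Suc)
  also have "\<dots> = mul (pw a) (pw (i + 1))" using step1.IH by (simp add: pw_Suc mul_assoc)
  finally show ?case .
next
  case (step2 i)
  have "pw (a + (i - 1)) = pw ((a + i) - 1)" by (simp add: algebra_simps)
  also have "\<dots> = mul (pw (a + i)) wi" by (rule pw_pred)
  also have "\<dots> = mul (pw a) (pw (i - 1))" using step2.IH by (simp add: pw_pred mul_assoc)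
  finally show ?case .
qed

lemma pw_nz: "pw j \<noteq> zero"
  unfolding pw_def using npow_nz w_nz wi_nz by simp

lemma pw_ge1: "0 \<le> m \<Longrightarrow> le one (pw m)"
  unfolding pw_def using one_le_npow[OF w(1)] by simp

lemma pw_gew: "0 < m \<Longrightarrow> le w (pw m)"
proof -
  assume m: "0 < m"
  have "pw m = pw ((m - 1) + 1)" by simp
  also have "\<dots> = mul (pw (m - 1)) w" by (rule pw_Suc)
  finally have e: "pw m = mul (pw (m - 1)) w" .
  have "le one (pw (m - 1))" using pw_ge1[of "m - 1"] m by simp
  then have "le (mul one w) (mul (pw (m - 1)) w)" by (rule le_mulR)
  then show ?thesis using e by simp
qed

lemma pw_mono: "a \<le> b \<Longrightarrow> le (pw a) (pw b)"
proof -
  assume ab: "a \<le> b"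
  have "pw b = mul (pw a) (pw (b - a))" using pw_add[of a "b - a"] by simp
  moreover have "le (mul (pw a) one) (mul (pw a) (pw (b - a)))" using pw_ge1[of "b - a"] ab by (intro le_mulL) simp
  ultimately show ?thesis by simp
qed

lemma pw_inj: "pw a = pw b \<Longrightarrow> a = b"
proof (rule ccontr)
  assume e: "pw a = pw b" and ne: "a \<noteq> b"
  have "\<exists>c d. c < d \<and> pw c = pw d" using e ne by (metis linorder_neqE)
  then obtain c d where cd: "c < d" "pw c = pw d" by blast
  have "pw d = mul (pw c) (pw (d - c))" using pw_add[of c "d - c"] by simp
  then have "mul (pw c) one = mul (pw c) (pw (d - c))" using cd by simp
  then have "pw (d - c) = one" using cancelL[OF pw_nz] by metis
  then have "le w one" using pw_gew[of "d - c"] cd by simp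
  then show False using w(1,2) le_antisym by blast
qed

lemma surj_pos: "\<forall>x. le one x \<longrightarrow> card {z. le one z \<and> le z x} = N \<longrightarrow> (\<exists>j. x = pw j)"
proof (induction N rule: less_induct)
  case (less N)
  show ?case
  proof (intro allI impI)
    fix x assume x1: "le one x" and c: "card {z. le one z \<and> le z x} = N"
    show "\<exists>j. x = pw j"
    proof (cases "x = one")
      case True then show ?thesis using pw_0 by metis
    next
      case False
      have xnz: "x \<noteq> zero" using x1 le_zero_iff zero_ne_one by metis
      have wx: "le w x" using w(3)[OF x1 False] .
      let ?x' = "mul x wi"
      have x'1: "le one ?x'" using le_mulR[OF wx, of wi] by simp
      have wi1: "le wi one" using le_mulL[OF w(1), of wi] by simp
      have x'x: "le ?x' x" using le_mulL[OF wi1, of x] by simp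
      have nx: "\<not> le x ?x'"
      proof
        assume "le x ?x'"
        then have "x = ?x'" using x'x le_antisym by blast
        then have "mul x one = mul x wi" by simp
        then have "wi = one" using cancelL[OF xnz] by metis
        then have "w = one" using wwi(1) by simp
        then show False using w(2) by simp
      qed
      obtain h where h: "le x (T h)" using upper by blast
      have fin: "finite {z. le one z \<and> le z x}"
        by (rule finite_subset[OF _ fin_int[OF zero_ne_one[symmetric], of "T h"]]) (use h le_trans in blast)
      have sub: "{z. le one z \<and> le z ?x'} \<subset> {z. le one z \<and> le z x}"
      proof
        show "{z. le one z \<and> le z ?x'} \<subseteq> {z. le one z \<and> le z x}" using x'x le_trans by blast
        have "x \<in> {z. le one z \<and> le z x}" using x1 by simp
        moreover have "x \<notin> {z. le one z \<and> le z ?x'}" using nx by simp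
        ultimately show "{z. le one z \<and> le z ?x'} \<noteq> {z. le one z \<and> le z x}" by blast
      qed
      have "card {z. le one z \<and> le z ?x'} < N" using psubset_card_mono[OF fin sub] c by simp
      then obtain j where j: "?x' = pw j" using less.IH x'1 by blast
      have "x = mul ?x' w" by (simp add: mul_assoc)
      also have "\<dots> = pw (j + 1)" using j pw_Suc by simp
      finally show ?thesis by blast
    qed
  qed
qed

lemma pw_surj: "x \<noteq> zero \<Longrightarrow> \<exists>j. x = pw j"
proof -
  assume xnz: "x \<noteq> zero"
  show ?thesis
  proof (cases "le one x")
    case True then show ?thesis using surj_pos by blast
  next
    case False
    then have "le x one" using total by blast
    then have "le (mul (inv x) x) (mul (inv x) one)" by (rule le_mulL)
    then have "le one (inv x)" using xnz by simp
    then obtain j where j: "inv x = pw j" using surj_pos by blast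
    have "mul (pw (- j)) (inv x) = one" using j pw_add[of "- j" j] by simp
    then have "mul (mul (pw (- j)) (inv x)) x = x" by simp
    then have "pw (- j) = x" using xnz by (simp add: mul_assoc)
    then show ?thesis by metis
  qed
qed

lemma n_ex: "\<exists>n0. 0 < n0 \<and> (\<forall>k. T k = pw (n0 * k))"
proof -
  obtain n0 where n0: "T 1 = pw n0" using pw_surj[OF T_nz] by blast
  have pos: "0 < n0"
  proof (rule ccontr)
    assume "\<not> 0 < n0"
    then have "le (pw n0) (pw 0)" by (intro pw_mono) simp
    then have "le (T 1) one" using n0 by simp
    then show False using T1 le_antisym by metis
  qed
  have "T k = pw (n0 * k)" for k
  proof (induction k rule: int_induct[where k = 0])
    case base then show ?case by simp
  next
    case (step1 i)
    have "T (i + 1) = mul (T i) (T 1)" by (rule T_add)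
    also have "\<dots> = mul (pw (n0 * i)) (pw n0)" using step1.IH n0 by simp
    also have "\<dots> = pw (n0 * (i + 1))" using pw_add[of "n0 * i" n0] by (simp add: algebra_simps)
    finally show ?case .
  next
    case (step2 i)
    have "mul (T (i - 1)) (T 1) = T i" using T_add[of "i - 1" 1] by simp
    also have "\<dots> = pw (n0 * i)" by (rule step2.IH)
    also have "\<dots> = mul (pw (n0 * (i - 1))) (pw n0)" using pw_add[of "n0 * (i - 1)" n0] by (simp add: algebra_simps)
    finally have "mul (T (i - 1)) (pw n0) = mul (pw (n0 * (i - 1))) (pw n0)" using n0 by simp
    then show ?case using cancelR[OF pw_nz] by metis
  qed
  then show ?thesis using pos by blast
qed

end

context dsa begin

definition Phi where "Phi opt = (case opt of None \<Rightarrow> zero | Some j \<Rightarrow> pw j)"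

lemma Phi_inj: "inj Phi"
proof (rule injI)
  fix p q assume e: "Phi p = Phi q"
  show "p = q"
  proof (cases p; cases q)
    fix a b assume "p = Some a" "q = Some b"
    then show ?thesis using e pw_inj by (simp add: Phi_def)
  qed (use e pw_nz in \<open>auto simp: Phi_def\<close>)
qed

lemma Phi_surj: "surj Phi"
proof -
  have "x \<in> range Phi" for x
  proof (cases "x = zero")
    case True then have "x = Phi None" by (simp add: Phi_def)
    then show ?thesis by blast
  next
    case False then obtain j where "x = pw j" using pw_surj by blast
    then have "x = Phi (Some j)" by (simp add: Phi_def)
    then show ?thesis by blast
  qed
  then show ?thesis by blast
qed

lemma Phi_add: "Phi (zmax_add p q) = add (Phi p) (Phi q)"
proof (cases p; cases q)
  fix a b assume pq: "p = Some a" "q = Some b"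
  show ?thesis
  proof (cases "a \<le> b")
    case True
    then have "le (pw a) (pw b)" by (rule pw_mono)
    then show ?thesis using pq True by (simp add: Phi_def zmax_add_def le_def max_def)
  next
    case False
    then have "le (pw b) (pw a)" by (intro pw_mono) simp
    then have "add (pw a) (pw b) = pw a" using add_comm le_def by metis
    then show ?thesis using pq False by (simp add: Phi_def zmax_add_def max_def)
  qed
qed (auto simp: Phi_def zmax_add_def)

lemma Phi_mul: "Phi (zmax_mul p q) = mul (Phi p) (Phi q)"
  by (cases p; cases q) (auto simp: Phi_def zmax_mul_def pw_add)

lemma final: "\<exists>n::nat. n > 0 \<and> (\<exists>psi :: 'd \<Rightarrow> int option.
           bij psi \<and>
           is_semiring_hom add mul zero one zmax_add zmax_mul zmax_zero zmax_one psi \<and>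
           (\<forall>k. psi (phi k) = F_embed n k))"
proof -
  obtain n0 where n0: "0 < n0" "\<forall>k. T k = pw (n0 * k)" using n_ex by blast
  define psi where "psi = inv_into UNIV Phi"
  have bP: "bij Phi" using Phi_inj Phi_surj by (rule bijI)
  have pP: "psi (Phi r) = r" for r unfolding psi_def using Phi_inj by (simp add: inv_into_f_f)
  have ex: "\<exists>r. x = Phi r" for x using Phi_surj by (metis surj_f_inv_f)
  have hom: "is_semiring_hom add mul zero one zmax_add zmax_mul zmax_zero zmax_one psi"
    unfolding is_semiring_hom_def
  proof (intro conjI allI)
    fix a b
    obtain p q where "a = Phi p" "b = Phi q" using ex by metis
    then show "psi (add a b) = zmax_add (psi a) (psi b)" "psi (mul a b) = zmax_mul (psi a) (psi b)"
      using pP Phi_add Phi_mul by metis+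
  next
    show "psi zero = zmax_zero" using pP[of None] by (simp add: Phi_def zmax_zero_def)
    show "psi one = zmax_one" using pP[of "Some 0"] by (simp add: Phi_def zmax_one_def)
  qed
  have bj: "bij psi" unfolding psi_def by (rule bij_imp_bij_inv[OF bP, unfolded inv_def])
  have emb: "psi (phi k) = F_embed (nat n0) k" for k
  proof (cases k)
    case None
    then show ?thesis using pP[of None] by (simp add: Phi_def phi_None F_embed_def)
  next
    case (Some j)
    have "phi k = Phi (Some (n0 * j))" using Some n0(2) by (simp add: Phi_def T_def)
    then show ?thesis using pP Some n0(1) by (simp add: F_embed_def)
  qed
  show ?thesis using n0(1) bj hom emb by (intro exI[of _ "nat n0"]) auto
qed

end

lemma final_thm:
  fixes add mul :: "'d \<Rightarrow> 'd \<Rightarrow> 'd" and zero one :: 'd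
    and phi :: "int option \<Rightarrow> 'd"
  assumes "is_zmax_division_semialgebra add mul zero one phi"
    and "is_finite_semialgebra add mul zero phi"
  shows "\<exists>n::nat. n > 0 \<and> (\<exists>psi :: 'd \<Rightarrow> int option.
           bij psi \<and>
           is_semiring_hom add mul zero one zmax_add zmax_mul zmax_zero zmax_one psi \<and>
           (\<forall>k. psi (phi k) = F_embed n k))"
proof -
  obtain gs where "\<forall>x. \<exists>ks :: int option list. length ks = length gs \<and>
        x = foldr add (map2 (\<lambda>k g. mul (phi k) g) ks gs) zero"
    using assms(2) unfolding is_finite_semialgebra_def by blast
  then interpret dsa add mul zero one phi gs using assms(1) by unfold_locales
  show ?thesis by (rule final)
qed


theorem mainTheorem2:
  fixes add mul :: "'d \<Rightarrow> 'd \<Rightarrow> 'd" and zero one :: 'd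
    and phi :: "int option \<Rightarrow> 'd"
  assumes "is_zmax_division_semialgebra add mul zero one phi"
    and "is_finite_semialgebra add mul zero phi"
  shows "\<exists>n::nat. n > 0 \<and> (\<exists>psi :: 'd \<Rightarrow> int option.
           bij psi \<and>
           is_semiring_hom add mul zero one zmax_add zmax_mul zmax_zero zmax_one psi \<and>
           (\<forall>k. psi (phi k) = F_embed n k))"
  using assms by (rule final_thm)

end
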